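(* Let $T\ge 1$ be an integer and let $\phi:\mathbb R\to(0,1)$ be a gate function. Consider the loss $L(z)=|\phi(z)^{T}-1|$ and the gradient flow $\frac{dz}{d\tau}=-\frac{\partial L}{\partial z}$ with an arbitrary initial value $z(0)\in\mathbb R$, and let $f(\tau)=\phi(z(\tau))$. (a) If $\phi=\sigma$ is the sigmoid function $\sigma(z)=1/(1+e^{-z})$, then $1-f(\tau)=O(\tau^{-1})$ as $\tau\to\infty$. (b) If $\phi=\sigma_{\rm ns}$ is the normalized softsign function $\sigma_{\rm ns}(z)=\frac12\left(\frac{z}{2+|z|}+1\right)$, then $1-f(\tau)=O(\tau^{-1/3})$ as $\tau\to\infty$.
   Context: This is a model problem for learning long time scales: $T=t_1-t_0$ is a time difference, $f=\phi(z)$ is a forget-gate value, and the target decay factor is $\lambda_*=1$. Note $\sigma_{\rm ns}(z)=(\mathrm{softsign}(z/2)+1)/2$ with $\mathrm{softsign}(z)=z/(1+|z|)$. *)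

theory Defs
  imports "HOL-Analysis.Analysis" "HOL-Library.Landau_Symbols"
begin

definition sigmoid :: "real \<Rightarrow> real" where
  "sigmoid z = 1 / (1 + exp (- z))"

definition softsign :: "real \<Rightarrow> real" where
  "softsign z = z / (1 + \<bar>z\<bar>)"

definition nsoftsign :: "real \<Rightarrow> real" where
  "nsoftsign z = (z / (2 + \<bar>z\<bar>) + 1) / 2"

definition gate_loss :: "(real \<Rightarrow> real) \<Rightarrow> nat \<Rightarrow> real \<Rightarrow> real" where
  "gate_loss \<phi> T z = \<bar>\<phi> z ^ T - 1\<bar>"

definition grad_flow :: "(real \<Rightarrow> real) \<Rightarrow> nat \<Rightarrow> (real \<Rightarrow> real) \<Rightarrow> bool" where
  "grad_flow \<phi> T z \<longleftrightarrow>
     (\<forall>t\<ge>0. (z has_real_derivative (- deriv (gate_loss \<phi> T) (z t))) (at t within {0..}))"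

end

theory Submission
  imports Defs
begin

lemma deriv_at0:
  fixes f :: "real \<Rightarrow> real"
  assumes "\<And>y. y \<noteq> 0 \<Longrightarrow> (f y - f 0) / y = g y" and "(g \<longlongrightarrow> D) (at 0)"
  shows "(f has_real_derivative D) (at 0)"
proof -
  have "\<forall>\<^sub>F y in at (0::real). g y = (f y - f 0) / (y - 0)"
    using assms(1) by (auto simp: eventually_at_filter)
  from tendsto_cong[OF this] assms(2) show ?thesis
    by (simp add: has_field_derivative_iff)
qed

lemma deriv_pieces:
  fixes f :: "real \<Rightarrow> real"
  assumes pos: "\<And>y. y > 0 \<Longrightarrow> f y = ga y" and neg: "\<And>y. y < 0 \<Longrightarrow> f y = gb y"
    and d1: "\<And>y. y > 0 \<Longrightarrow> (ga has_real_derivative D y) (at y)"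
    and d2: "\<And>y. y < 0 \<Longrightarrow> (gb has_real_derivative D y) (at y)"
    and x: "x \<noteq> 0"
  shows "(f has_real_derivative D x) (at x)"
proof (cases "x > 0")
  case True
  show ?thesis
    by (rule has_field_derivative_transform_within_open[OF d1[OF True], of "{0<..}"])
       (use True pos in auto)
next
  case False
  with x have "x < 0" by simp
  show ?thesis
    by (rule has_field_derivative_transform_within_open[OF d2[OF \<open>x < 0\<close>], of "{..<0}"])
       (use \<open>x < 0\<close> neg in auto)
qed

lemma nsoftsign_deriv: "(nsoftsign has_real_derivative 1 / (2 + \<bar>x\<bar>)^2) (at x)"
proof (cases "x = 0")
  case True
  have "((\<lambda>y. 1 / (2 * (2 + \<bar>y\<bar>))) \<longlongrightarrow> 1 / (2 * (2 + \<bar>0\<bar>))) (at (0::real))"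
    by (intro tendsto_intros) auto
  then have "(nsoftsign has_real_derivative 1 / (2 * (2 + \<bar>0\<bar>))) (at 0)"
  proof (intro deriv_at0[where g = "\<lambda>y. 1 / (2 * (2 + \<bar>y\<bar>))"])
    fix y :: real assume "y \<noteq> 0"
    then show "(nsoftsign y - nsoftsign 0) / y = 1 / (2 * (2 + \<bar>y\<bar>))"
    proof -
      have "2 + \<bar>y\<bar> > 0" by simp
      then have "nsoftsign y - nsoftsign 0 = y / (2 * (2 + \<bar>y\<bar>))"
        unfolding nsoftsign_def by (simp add: field_simps)
      then show ?thesis using \<open>y \<noteq> 0\<close> by simp
    qed
  qed
  then show ?thesis using True by (simp add: power2_eq_square)
next
  case False
  show ?thesis
  proof (rule deriv_pieces[where ga = "\<lambda>y. (y + 1) / (y + 2)" and gb = "\<lambda>y. 1 / (2 - y)"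
        and D = "\<lambda>y. 1 / (2 + \<bar>y\<bar>)^2", OF _ _ _ _ False])
    fix y :: real assume y: "y > 0"
    then have "\<bar>y\<bar> = y" "y + 2 \<noteq> 0" by auto
    then show "nsoftsign y = (y + 1) / (y + 2)"
      unfolding nsoftsign_def by (simp add: divide_simps algebra_simps)
  next
    fix y :: real assume y: "y < 0"
    then have "\<bar>y\<bar> = - y" "2 - y \<noteq> 0" by auto
    then show "nsoftsign y = 1 / (2 - y)"
      unfolding nsoftsign_def by (simp add: divide_simps algebra_simps)
  next
    fix y :: real assume y: "y > 0"
    then have "\<bar>y\<bar> = y" "y + 2 \<noteq> 0" by auto
    then show "((\<lambda>y. (y + 1) / (y + 2)) has_real_derivative 1 / (2 + \<bar>y\<bar>)^2) (at y)"
      by (auto intro!: derivative_eq_intros simp: divide_simps power2_eq_square algebra_simps)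
  next
    fix y :: real assume y: "y < 0"
    then have "\<bar>y\<bar> = - y" "2 - y \<noteq> 0" by auto
    then show "((\<lambda>y. 1 / (2 - y)) has_real_derivative 1 / (2 + \<bar>y\<bar>)^2) (at y)"
      by (auto intro!: derivative_eq_intros simp: divide_simps power2_eq_square algebra_simps)
  qed
qed

definition hh :: "real \<Rightarrow> real" where
  "hh y = 8 + 12 * y + 6 * (y * \<bar>y\<bar>) + y ^ 3"

lemma hh_deriv: "(hh has_real_derivative 3 * (2 + \<bar>x\<bar>)^2) (at x)"
proof (cases "x = 0")
  case True
  have "((\<lambda>y. 12 + 6 * \<bar>y\<bar> + y^2) \<longlongrightarrow> 12 + 6 * \<bar>0\<bar> + 0^2) (at (0::real))"
    by (intro tendsto_intros)
  then have "(hh has_real_derivative 12 + 6 * \<bar>0\<bar> + 0^2) (at 0)"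
  proof (intro deriv_at0[where g = "\<lambda>y. 12 + 6 * \<bar>y\<bar> + y^2"])
    fix y :: real assume "y \<noteq> 0"
    then show "(hh y - hh 0) / y = 12 + 6 * \<bar>y\<bar> + y^2"
      unfolding hh_def by (simp add: field_simps power2_eq_square power3_eq_cube)
  qed
  then show ?thesis using True by (simp add: power2_eq_square)
next
  case False
  show ?thesis
  proof (rule deriv_pieces[where ga = "\<lambda>y. 8 + 12 * y + 6 * y^2 + y ^ 3"
        and gb = "\<lambda>y. 8 + 12 * y - 6 * y^2 + y ^ 3"
        and D = "\<lambda>y. 3 * (2 + \<bar>y\<bar>)^2", OF _ _ _ _ False])
    fix y :: real assume "y > 0" then show "hh y = 8 + 12 * y + 6 * y^2 + y ^ 3"
      unfolding hh_def by (simp add: power2_eq_square)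
  next
    fix y :: real assume "y < 0" then show "hh y = 8 + 12 * y - 6 * y^2 + y ^ 3"
      unfolding hh_def by (simp add: power2_eq_square)
  next
    fix y :: real assume y: "y > 0"
    show "((\<lambda>y. 8 + 12 * y + 6 * y^2 + y ^ 3) has_real_derivative 3 * (2 + \<bar>y\<bar>)^2) (at y)"
      using y by (auto intro!: derivative_eq_intros simp: field_simps power2_eq_square)
  next
    fix y :: real assume y: "y < 0"
    show "((\<lambda>y. 8 + 12 * y - 6 * y^2 + y ^ 3) has_real_derivative 3 * (2 + \<bar>y\<bar>)^2) (at y)"
      using y by (auto intro!: derivative_eq_intros simp: field_simps power2_eq_square)
  qed
qed

lemma hh_nonpos: "y \<le> 0 \<Longrightarrow> hh y \<le> 8"
proof -
  assume y: "y \<le> 0"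
  have "y ^ 3 \<le> 0" using y by (simp add: power3_eq_cube mult_nonpos_nonneg mult_nonneg_nonneg
     zero_le_mult_iff mult_le_0_iff)
  moreover have "y * \<bar>y\<bar> \<le> 0" using y by (simp add: mult_nonpos_nonneg)
  ultimately show ?thesis unfolding hh_def using y by linarith
qed

lemma hh_pos: "y \<ge> 0 \<Longrightarrow> hh y = (2 + y) ^ 3"
  unfolding hh_def by (simp add: power3_eq_cube field_simps)

lemma sigmoid_bounds: "0 < sigmoid z" "sigmoid z < 1"
proof -
  have e: "1 < 1 + exp (- z)" by simp
  then have "0 < 1 + exp (- z)" by linarith
  then show "0 < sigmoid z" unfolding sigmoid_def by simp
  from e have "0 < 1 + exp (- z)" by linarith
  with e show "sigmoid z < 1" unfolding sigmoid_def by (simp add: divide_less_eq)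
qed

lemma nsoftsign_bounds: "0 < nsoftsign z" "nsoftsign z < 1"
proof -
  have p: "0 < 2 + \<bar>z\<bar>" by simp
  have "z < 2 + \<bar>z\<bar>" "- (2 + \<bar>z\<bar>) < z" by auto
  then have "z / (2 + \<bar>z\<bar>) < 1" "-1 < z / (2 + \<bar>z\<bar>)"
    using p by (simp_all add: divide_less_eq less_divide_eq)
  then show "0 < nsoftsign z" "nsoftsign z < 1" unfolding nsoftsign_def by auto
qed

lemma sigmoid_deriv: "(sigmoid has_real_derivative sigmoid x ^ 2 * exp (- x)) (at x)"
proof -
  have p: "1 + exp (- x) \<noteq> 0"
    by (metis add_pos_pos exp_gt_zero less_numeral_extra(1) less_irrefl)
  have d: "((\<lambda>x. 1 + exp (- x)) has_real_derivative - exp (- x)) (at x)"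
    by (auto intro!: derivative_eq_intros)
  have "((\<lambda>x. inverse (1 + exp (- x))) has_real_derivative
        - (- exp (- x) * inverse ((1 + exp (- x)) ^ Suc (Suc 0)))) (at x)"
    by (rule DERIV_inverse_fun[OF d p])
  moreover have "- (- exp (- x) * inverse ((1 + exp (- x)) ^ Suc (Suc 0)))
      = sigmoid x ^ 2 * exp (- x)"
    unfolding sigmoid_def by (simp add: power2_eq_square divide_inverse)
  moreover have "sigmoid = (\<lambda>x. inverse (1 + exp (- x)))"
    unfolding sigmoid_def[abs_def] by (simp add: divide_inverse)
  ultimately show ?thesis by (simp add: mult.commute)
qed

lemma sigmoid_mono: "a \<le> b \<Longrightarrow> sigmoid a \<le> sigmoid b"
  unfolding sigmoid_def by (simp add: frac_le add_pos_pos)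

lemma nsoftsign_mono: "a \<le> b \<Longrightarrow> nsoftsign a \<le> nsoftsign b"
proof -
  assume ab: "a \<le> b"
  have "(nsoftsign has_real_derivative 1 / (2 + \<bar>x\<bar>)^2) (at x)" for x
    by (rule nsoftsign_deriv)
  then show ?thesis
    using ab by (intro DERIV_nonneg_imp_nondecreasing[where f = nsoftsign]) (auto intro!: exI)
qed

lemma loss_deriv:
  assumes b: "\<And>z. 0 < \<phi> z \<and> \<phi> z < 1"
    and d: "(\<phi> has_real_derivative D) (at x)"
  shows "deriv (gate_loss \<phi> T) x = - (of_nat T * (D * \<phi> x ^ (T - 1)))"
proof -
  have "gate_loss \<phi> T = (\<lambda>z. 1 - \<phi> z ^ T)"
  proof
    fix z
    have "\<phi> z ^ T \<le> 1" using b[of z] by (simp add: power_le_one)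
    then show "gate_loss \<phi> T z = 1 - \<phi> z ^ T" unfolding gate_loss_def by simp
  qed
  moreover have "((\<lambda>z. 1 - \<phi> z ^ T) has_real_derivative - (of_nat T * (D * \<phi> x ^ (T - 1)))) (at x)"
    using d by (auto intro!: derivative_eq_intros)
  ultimately show ?thesis by (simp add: DERIV_imp_deriv)
qed

lemma grow:
  fixes F F' :: "real \<Rightarrow> real"
  assumes d: "\<And>t. t \<ge> 0 \<Longrightarrow> (F has_real_derivative F' t) (at t within {0..})"
    and k: "\<And>t. t \<ge> 0 \<Longrightarrow> F' t \<ge> k"
    and t: "t \<ge> 0"
  shows "F t \<ge> F 0 + k * t"
proof -
  let ?G = "\<lambda>s. F s - k * s"
  have dG: "(?G has_real_derivative (F' s - k)) (at s within {0..})" if "s \<ge> 0" for s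
    using d[OF that] by (auto intro!: derivative_eq_intros)
  have "?G 0 \<le> ?G t"
  proof (rule DERIV_nonneg_imp_increasing_open[OF t])
    fix x :: real assume x: "0 < x" "x < t"
    have "(?G has_real_derivative (F' x - k)) (at x within {0<..})"
      by (rule has_field_derivative_subset[OF dG]) (use x in auto)
    moreover have "at x within {0<..} = at x"
      by (rule at_within_open) (use x in auto)
    ultimately have "(?G has_real_derivative (F' x - k)) (at x)" by simp
    then show "\<exists>y. DERIV ?G x :> y \<and> y \<ge> 0" using k[of x] x by auto
  next
    have "continuous (at s within {0..}) ?G" if "s \<ge> 0" for s
      using dG[OF that] by (rule DERIV_continuous)
    then have "continuous_on {0..} ?G"
      by (simp add: continuous_on_eq_continuous_within)
    then show "continuous_on {0..t} ?G"
      by (rule continuous_on_subset) auto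
  qed
  then show ?thesis by simp
qed

lemma flow_deriv:
  assumes b: "\<And>z. 0 < \<phi> z \<and> \<phi> z < 1"
    and d: "\<And>x. (\<phi> has_real_derivative D x) (at x)"
    and gf: "grad_flow \<phi> T z" and t: "t \<ge> 0"
  shows "(z has_real_derivative of_nat T * (D (z t) * \<phi> (z t) ^ (T - 1))) (at t within {0..})"
  using gf t loss_deriv[OF b d[of "z t"], of T] unfolding grad_flow_def by auto

lemma sigmoid_part:
  assumes T: "T \<ge> 1" and gf: "grad_flow sigmoid T z"
  shows "(\<lambda>\<tau>. 1 - sigmoid (z \<tau>)) \<in> O[at_top](\<lambda>\<tau>. 1 / \<tau>)"
proof -
  define Z' where "Z' t = of_nat T * ((sigmoid (z t) ^ 2 * exp (- z t)) * sigmoid (z t) ^ (T - 1))" for t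
  have dz: "(z has_real_derivative Z' t) (at t within {0..})" if "t \<ge> 0" for t
    unfolding Z'_def
    by (rule flow_deriv[OF _ sigmoid_deriv gf that]) (simp add: sigmoid_bounds)
  have Z'pos: "Z' t \<ge> 0" for t
    unfolding Z'_def using sigmoid_bounds[of "z t"] by simp
  have mono: "z t \<ge> z 0" if "t \<ge> 0" for t
    using grow[of z Z' 0 t] dz Z'pos that by auto
  define c where "c = sigmoid (z 0)"
  define k where "k = of_nat T * c ^ (T + 1)"
  have cpos: "c > 0" unfolding c_def by (simp add: sigmoid_bounds)
  have kpos: "k > 0" unfolding k_def using cpos T by simp
  have dF: "((\<lambda>t. exp (z t)) has_real_derivative exp (z t) * Z' t) (at t within {0..})"
    if "t \<ge> 0" for t
    using dz[OF that] by (auto intro!: derivative_eq_intros)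
  have F'k: "exp (z t) * Z' t \<ge> k" if "t \<ge> 0" for t
  proof -
    have "exp (z t) * Z' t = of_nat T * sigmoid (z t) ^ (T + 1)"
    proof -
      have "sigmoid (z t) ^ 2 * sigmoid (z t) ^ (T - 1) = sigmoid (z t) ^ (T + 1)"
        using T by (simp add: power_add[symmetric])
      moreover have "exp (z t) * exp (- z t) = 1" by (simp add: exp_minus)
      ultimately show ?thesis unfolding Z'_def
        by (metis (no_types, lifting) mult.assoc mult.commute mult.left_commute mult_1)
    qed
    moreover have "c ^ (T + 1) \<le> sigmoid (z t) ^ (T + 1)"
      unfolding c_def using mono[OF that] cpos c_def
      by (intro power_mono sigmoid_mono) auto
    ultimately show ?thesis unfolding k_def by (simp add: mult_left_mono)
  qed
  have Fbound: "exp (z t) \<ge> exp (z 0) + k * t" if "t \<ge> 0" for t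
    using grow[of "\<lambda>t. exp (z t)" "\<lambda>t. exp (z t) * Z' t" k t] dF F'k that by auto
  have "\<forall>\<^sub>F \<tau> in at_top. norm (1 - sigmoid (z \<tau>)) \<le> (1 / k) * norm (1 / \<tau>)"
    using eventually_ge_at_top[of "1::real"]
  proof eventually_elim
    case (elim \<tau>)
    define w where "w = z \<tau>"
    have "exp (z 0) > 0" by simp
    then have ew: "exp w \<ge> k * \<tau>" using Fbound[of \<tau>] elim unfolding w_def
      by linarith
    have kt: "k * \<tau> > 0" using kpos elim by simp
    have ep: "exp w > 0" by simp
    then have ep1: "1 + exp w > 0" by linarith
    have eq: "1 - sigmoid w = 1 / (1 + exp w)"
      unfolding sigmoid_def exp_minus using ep ep1 by (simp add: divide_simps)
    have "1 / (1 + exp w) \<le> 1 / (k * \<tau>)"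
      using ew kt by (intro divide_left_mono) auto
    moreover have "1 / (1 + exp w) > 0" using ep1 by simp
    ultimately show ?case using eq elim kpos unfolding w_def[symmetric]
      by (simp add: abs_of_pos)
  qed
  then show ?thesis by (rule bigoI)
qed

lemma softsign_part:
  assumes T: "T \<ge> 1" and gf: "grad_flow nsoftsign T z"
  shows "(\<lambda>\<tau>. 1 - nsoftsign (z \<tau>)) \<in> O[at_top](\<lambda>\<tau>. 1 / \<tau> powr (1/3))"
proof -
  define Z' where "Z' t = of_nat T * ((1 / (2 + \<bar>z t\<bar>)^2) * nsoftsign (z t) ^ (T - 1))" for t
  have dz: "(z has_real_derivative Z' t) (at t within {0..})" if "t \<ge> 0" for t
    unfolding Z'_def
    by (rule flow_deriv[OF _ nsoftsign_deriv gf that]) (simp add: nsoftsign_bounds)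
  have Z'pos: "Z' t \<ge> 0" for t
    unfolding Z'_def using nsoftsign_bounds[of "z t"] by simp
  have mono: "z t \<ge> z 0" if "t \<ge> 0" for t
    using grow[of z Z' 0 t] dz Z'pos that by auto
  define c where "c = nsoftsign (z 0)"
  define k where "k = 3 * of_nat T * c ^ (T - 1)"
  have cpos: "c > 0" unfolding c_def by (simp add: nsoftsign_bounds)
  have kpos: "k > 0" unfolding k_def using cpos T by simp
  have dF: "((\<lambda>t. hh (z t)) has_real_derivative 3 * (2 + \<bar>z t\<bar>)^2 * Z' t) (at t within {0..})"
    if "t \<ge> 0" for t
    by (rule DERIV_chain2[OF hh_deriv dz[OF that]])
  have F'k: "3 * (2 + \<bar>z t\<bar>)^2 * Z' t \<ge> k" if "t \<ge> 0" for t
  proof -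
    have nz: "(2 + \<bar>z t\<bar>)^2 \<noteq> 0" by simp
    have "3 * (2 + \<bar>z t\<bar>)^2 * Z' t = 3 * of_nat T * nsoftsign (z t) ^ (T - 1)"
      unfolding Z'_def using nz by simp
    moreover have "c ^ (T - 1) \<le> nsoftsign (z t) ^ (T - 1)"
      unfolding c_def using mono[OF that] cpos c_def
      by (intro power_mono nsoftsign_mono) auto
    ultimately show ?thesis unfolding k_def by (simp add: mult_left_mono)
  qed
  have Fbound: "hh (z t) \<ge> hh (z 0) + k * t" if "t \<ge> 0" for t
    using grow[of "\<lambda>t. hh (z t)" "\<lambda>t. 3 * (2 + \<bar>z t\<bar>)^2 * Z' t" k t] dF F'k that by auto
  define C where "C = 1 / (k / 2) powr (1/3)"
  have "\<forall>\<^sub>F \<tau> in at_top. norm (1 - nsoftsign (z \<tau>)) \<le> C * norm (1 / \<tau> powr (1/3))"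
    using eventually_ge_at_top[of "max 1 (2 * (\<bar>hh (z 0)\<bar> + 8) / k)"]
  proof eventually_elim
    case (elim \<tau>)
    define w where "w = z \<tau>"
    have t1: "\<tau> \<ge> 1" using elim by simp
    have "2 * (\<bar>hh (z 0)\<bar> + 8) / k \<le> \<tau>" using elim by simp
    then have kt: "2 * (\<bar>hh (z 0)\<bar> + 8) \<le> k * \<tau>" using kpos
      by (simp add: divide_le_eq mult.commute)
    have hw: "hh w \<ge> hh (z 0) + k * \<tau>" using Fbound[of \<tau>] t1 unfolding w_def by simp
    have hw2: "hh w > 8 \<and> hh w \<ge> k * \<tau> / 2"
    proof -
      define a where "a = hh (z 0)"
      define b where "b = k * \<tau>"
      have "a + b \<le> hh w" "2 * (\<bar>a\<bar> + 8) \<le> b" using hw kt unfolding a_def b_def by auto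
      then have "hh w > 8 \<and> hh w \<ge> b / 2" by (cases "a \<ge> 0") auto
      then show ?thesis unfolding b_def .
    qed
    have wpos: "w > 0"
    proof (rule ccontr)
      assume "\<not> w > 0"
      then have "w \<le> 0" by simp
      then have "hh w \<le> 8" by (rule hh_nonpos)
      with hw2 show False by simp
    qed
    have h3: "(2 + w) ^ 3 \<ge> k * \<tau> / 2"
      using hw2 hh_pos[of w] wpos by simp
    have p: "2 + w > 0" using wpos by simp
    have eq: "1 - nsoftsign w = 1 / (2 + w)"
      unfolding nsoftsign_def using p wpos by (simp add: divide_simps)
    have "((2 + w) ^ 3) powr (1/3) = 2 + w"
    proof -
      have "(2 + w) ^ 3 = (2 + w) powr 3" using p by (simp add: powr_numeral)
      then have "((2 + w) ^ 3) powr (1/3) = (2 + w) powr (3 * (1/3))" by (simp only: powr_powr)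
      also have "\<dots> = 2 + w" using p by simp
      finally show ?thesis .
    qed
    moreover have "(k * \<tau> / 2) powr (1/3) \<le> ((2 + w) ^ 3) powr (1/3)"
      using h3 kpos t1 by (intro powr_mono2) auto
    moreover have "(k * \<tau> / 2) powr (1/3) = (k / 2) powr (1/3) * \<tau> powr (1/3)"
      using kpos t1 by (simp add: powr_mult[symmetric])
    ultimately have low: "(k / 2) powr (1/3) * \<tau> powr (1/3) \<le> 2 + w" by simp
    have pk: "(k / 2) powr (1/3) * \<tau> powr (1/3) > 0" using kpos t1 by simp
    have "1 / (2 + w) \<le> 1 / ((k / 2) powr (1/3) * \<tau> powr (1/3))"
      using low pk by (intro divide_left_mono) auto
    also have "\<dots> = C * (1 / \<tau> powr (1/3))" unfolding C_def by simp
    finally have "1 / (2 + w) \<le> C * (1 / \<tau> powr (1/3))" .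
    moreover have "1 / (2 + w) > 0" using p by simp
    moreover have "\<tau> powr (1/3) > 0" using t1 by simp
    ultimately show ?case using eq unfolding w_def[symmetric]
      by (simp add: abs_of_pos)
  qed
  then show ?thesis by (rule bigoI)
qed

theorem proposition2:
  fixes T :: nat
  assumes "T \<ge> 1"
  shows "(\<forall>z. grad_flow sigmoid T z \<longrightarrow>
            (\<lambda>\<tau>. 1 - sigmoid (z \<tau>)) \<in> O[at_top](\<lambda>\<tau>. 1 / \<tau>))
       \<and> (\<forall>z. grad_flow nsoftsign T z \<longrightarrow>
            (\<lambda>\<tau>. 1 - nsoftsign (z \<tau>)) \<in> O[at_top](\<lambda>\<tau>. 1 / \<tau> powr (1/3)))"
  using sigmoid_part[OF assms] softsign_part[OF assms] by blast

end
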